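(* Let $X$ be a finite set of proposals with $|X|\geq 3$. No profile-index-based DSF $\Delta_\delta$ induced by a neutral profile index function $\delta$ satisfies Position Unanimity.
   Context: $X!$ is the set of strict linear orders on $X$; a profile is a function $R:N\to X!$ with $N\subset\mathbb{N}$ finite and nonempty. A profile is unanimous if all agents report the same ranking. A profile index function is a function $\delta$ from the set of all profiles to $\mathbb{R}$; it is neutral if $\delta(R)=\delta(\sigma(R))$ for every permutation $\sigma:X\to X$ (applied to rename proposals in every ranking). $R^{\hat{x}}$ denotes the profile obtained from $R$ by moving $x$ to the top of every agent's ranking (other proposals keep their relative order), and $\Delta_\delta(R)=\arg\min_{x\in X}\delta(R^{\hat{x}})$. A proposal $x$ occurs in the same position throughout $R$ if the number of proposals ranked above $x$ is the same in every agent's ranking. Position Unanimity: $x\notin\Delta(R)$ for every non-unanimous profile $R$ and every proposal $x$ occurring in the same position throughout $R$. *)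

theory Defs
  imports Complex_Main
begin

text \<open>Proposals are the elements of a finite type 'a (the set X = UNIV).
  A ranking is a strict linear order on X, given as a relation r where (y,x) \<in> r
  means y is ranked above x.  A profile R : N \<rightarrow> X! (N \<subseteq> nat finite, nonempty)
  is represented as a partial map nat \<Rightarrow> 'a rel option with domain N.\<close>

type_synonym 'a profile = "nat \<Rightarrow> 'a rel option"

definition is_profile :: "'a profile \<Rightarrow> bool" where
  "is_profile R \<longleftrightarrow> finite (dom R) \<and> dom R \<noteq> {} \<and>
     (\<forall>i r. R i = Some r \<longrightarrow> strict_linear_order_on UNIV r)"

definition unanimous :: "'a profile \<Rightarrow> bool" where
  "unanimous R \<longleftrightarrow> (\<forall>i\<in>dom R. \<forall>j\<in>dom R. R i = R j)"

definition rename_profile :: "('a \<Rightarrow> 'a) \<Rightarrow> 'a profile \<Rightarrow> 'a profile" where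
  "rename_profile \<sigma> R = (\<lambda>i. map_option (\<lambda>r. map_prod \<sigma> \<sigma> ` r) (R i))"

definition neutral :: "('a profile \<Rightarrow> real) \<Rightarrow> bool" where
  "neutral \<delta> \<longleftrightarrow> (\<forall>R \<sigma>. is_profile R \<and> bij \<sigma> \<longrightarrow> \<delta> R = \<delta> (rename_profile \<sigma> R))"

definition move_top :: "'a \<Rightarrow> 'a rel \<Rightarrow> 'a rel" where
  "move_top x r = {(y, z) \<in> r. y \<noteq> x \<and> z \<noteq> x} \<union> {(x, z) | z. z \<noteq> x}"

definition top_profile :: "'a \<Rightarrow> 'a profile \<Rightarrow> 'a profile" where
  "top_profile x R = (\<lambda>i. map_option (move_top x) (R i))"

text \<open>\<Delta>_\<delta>(R) = argmin_x \<delta>(R^x).\<close>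
definition Delta :: "('a profile \<Rightarrow> real) \<Rightarrow> 'a profile \<Rightarrow> 'a set" where
  "Delta \<delta> R = {x. \<forall>y. \<delta> (top_profile x R) \<le> \<delta> (top_profile y R)}"

definition position :: "'a rel \<Rightarrow> 'a \<Rightarrow> nat" where
  "position r x = card {y. (y, x) \<in> r}"

definition same_position :: "'a profile \<Rightarrow> 'a \<Rightarrow> bool" where
  "same_position R x \<longleftrightarrow>
     (\<forall>i j ri rj. R i = Some ri \<and> R j = Some rj \<longrightarrow> position ri x = position rj x)"

definition position_unanimity :: "('a profile \<Rightarrow> 'a set) \<Rightarrow> bool" where
  "position_unanimity D \<longleftrightarrow>
     (\<forall>R x. is_profile R \<and> \<not> unanimous R \<and> same_position R x \<longrightarrow> x \<notin> D R)"

end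

theory Submission
  imports Defs
begin

definition rk :: "('a \<Rightarrow> nat) \<Rightarrow> 'a rel" where
  "rk g = {(y,z). g y < g z}"

lemma rk_slo: "inj g \<Longrightarrow> strict_linear_order_on UNIV (rk g)"
  unfolding strict_linear_order_on_def rk_def trans_def irrefl_def total_on_def
  by (auto simp: inj_eq) (metis injD linorder_neq_iff)

lemma move_top_slo:
  assumes "strict_linear_order_on UNIV r"
  shows "strict_linear_order_on UNIV (move_top x r)"
  using assms unfolding strict_linear_order_on_def move_top_def trans_def irrefl_def total_on_def
  by blast

lemma img_inv:
  assumes "\<And>z. s (s z) = z"
  shows "(p,q) \<in> map_prod s s ` S \<longleftrightarrow> (s p, s q) \<in> S"
proof
  assume "(p,q) \<in> map_prod s s ` S"
  then show "(s p, s q) \<in> S" using assms by auto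
next
  assume "(s p, s q) \<in> S"
  then have "map_prod s s (s p, s q) \<in> map_prod s s ` S" by blast
  then show "(p,q) \<in> map_prod s s ` S" using assms by simp
qed

definition sw :: "'a \<Rightarrow> 'a \<Rightarrow> 'a \<Rightarrow> 'a" where
  "sw u v x = (if x = u then v else if x = v then u else x)"

lemma sw_inv: "sw u v (sw u v x) = x" unfolding sw_def by auto

lemma sw_bij: "bij (sw u v)"
  by (metis bijI' sw_inv)

definition tp :: "'a \<Rightarrow> ('a \<Rightarrow> nat) \<Rightarrow> 'a \<Rightarrow> nat" where
  "tp u g y = (if y = u then 0 else Suc (g y))"

lemma mt_rk: "move_top u (rk g) = rk (tp u g)"
  unfolding move_top_def rk_def tp_def by auto

lemma rk_img:
  assumes "\<And>z. s (s z) = z"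
  shows "map_prod s s ` rk g = rk (\<lambda>y. g (s y))"
proof (intro set_eqI)
  fix pq :: "'a \<times> 'a"
  obtain p q where pq: "pq = (p, q)" by (cases pq)
  show "pq \<in> map_prod s s ` rk g \<longleftrightarrow> pq \<in> rk (\<lambda>y. g (s y))"
    unfolding pq img_inv[of s, OF assms] by (simp add: rk_def)
qed

lemma rk_eq: "(\<And>p q. G1 p < G1 q \<longleftrightarrow> G2 p < G2 q) \<Longrightarrow> rk G1 = rk G2"
  unfolding rk_def by auto

theorem theorem2:
  assumes "card (UNIV :: 'a set) \<ge> 3"
  shows "\<not> (\<exists>\<delta> :: ('a::finite) profile \<Rightarrow> real. neutral \<delta> \<and> position_unanimity (Delta \<delta>))"
proof
  assume "\<exists>\<delta> :: 'a profile \<Rightarrow> real. neutral \<delta> \<and> position_unanimity (Delta \<delta>)"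
  then obtain \<delta> :: "'a profile \<Rightarrow> real" where neu: "neutral \<delta>" and pu: "position_unanimity (Delta \<delta>)"
    by blast
  obtain a b c :: 'a where abc: "a \<noteq> b" "b \<noteq> c" "a \<noteq> c"
  proof -
    have "\<exists>a b c :: 'a. a \<noteq> b \<and> b \<noteq> c \<and> a \<noteq> c"
    proof (rule ccontr)
      assume "\<not> ?thesis"
      then have "\<forall>a b c :: 'a. a = b \<or> b = c \<or> a = c" by blast
      obtain a :: 'a where True by blast
      show False
      proof (cases "\<exists>b::'a. b \<noteq> a")
        case True
        then obtain b where b: "b \<noteq> a" by blast
        have "(UNIV :: 'a set) \<subseteq> {a, b}" using \<open>\<forall>a b c :: 'a. a = b \<or> b = c \<or> a = c\<close> b by blast
        then have "card (UNIV :: 'a set) \<le> card {a, b}" by (intro card_mono) auto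
        also have "\<dots> \<le> 2" by (simp add: card_insert_le_m1)
        finally show False using assms by simp
      next
        case False
        then have "(UNIV :: 'a set) \<subseteq> {a}" by blast
        then have "card (UNIV :: 'a set) \<le> card {a}" by (intro card_mono) auto
        then show False using assms by simp
      qed
    qed
    then show ?thesis using that by blast
  qed
  obtain g0 :: "'a \<Rightarrow> nat" where g0: "inj g0"
    using finite_imp_inj_to_nat_seg[of "UNIV :: 'a set"] by auto
  define h where "h x = (if x = a then 0 else if x = b then 1 else if x = c then 2 else 3 + g0 x)" for x
  define h2 where "h2 x = (if x = a then 2 else if x = c then 0 else h x)" for x
  have injh: "inj h" unfolding h_def using abc g0 by (auto intro!: injI dest: injD split: if_splits)
  have injh2: "inj h2" unfolding h2_def h_def using abc g0 by (auto intro!: injI dest: injD split: if_splits)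
  define r1 where "r1 = rk h"
  define r2 where "r2 = rk h2"
  define R :: "'a profile" where "R i = (if i = 0 then Some r1 else if i = 1 then Some r2 else None)" for i
  have domR: "dom R = {0, 1}" unfolding R_def by (auto split: if_splits)
  have slo1: "strict_linear_order_on UNIV r1" unfolding r1_def by (rule rk_slo[OF injh])
  have slo2: "strict_linear_order_on UNIV r2" unfolding r2_def by (rule rk_slo[OF injh2])
  have profR: "is_profile R" unfolding is_profile_def domR using slo1 slo2
    by (auto simp: R_def split: if_splits)
  have nu: "\<not> unanimous R"
  proof
    assume "unanimous R"
    then have "R 0 = R 1" unfolding unanimous_def domR by blast
    then have "r1 = r2" by (simp add: R_def)
    moreover have "(a, c) \<in> r1" using abc by (simp add: r1_def rk_def h_def)
    moreover have "(a, c) \<notin> r2" using abc by (simp add: r2_def rk_def h2_def h_def)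
    ultimately show False by simp
  qed
  have sp: "same_position R x" if "x \<noteq> a" "x \<noteq> c" for x
  proof -
    have "position r1 x = position r2 x"
    proof (cases "x = b")
      case True
      have "{y. (y, x) \<in> r1} = {a}" using True abc by (auto simp: r1_def rk_def h_def)
      moreover have "{y. (y, x) \<in> r2} = {c}" using True abc by (auto simp: r2_def rk_def h2_def h_def)
      ultimately show ?thesis by (simp add: position_def)
    next
      case False
      have "{y. (y, x) \<in> r1} = {y. (y, x) \<in> r2}" using False that abc
        by (auto simp: r1_def r2_def rk_def h2_def h_def)
      then show ?thesis by (simp add: position_def)
    qed
    then show ?thesis unfolding same_position_def R_def by (auto split: if_splits)
  qed
  have notD: "x \<notin> Delta \<delta> R" if "x \<noteq> a" "x \<noteq> c" for x
    using pu profR nu sp[OF that] unfolding position_unanimity_def by blast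
  have proft: "is_profile (top_profile x R)" for x
  proof -
    have "dom (top_profile x R) = dom R" unfolding top_profile_def by (auto simp: dom_def)
    moreover have "strict_linear_order_on UNIV r" if tpi: "top_profile x R i = Some r" for i r
    proof -
      obtain r0 where r0: "R i = Some r0" "r = move_top x r0" using tpi unfolding top_profile_def by (cases "R i") simp_all
      have "strict_linear_order_on UNIV r0" using profR r0(1) unfolding is_profile_def by simp
      then show ?thesis unfolding r0(2) by (rule move_top_slo)
    qed
    ultimately show ?thesis using profR unfolding is_profile_def by auto
  qed
  have mt: "\<And>p q x r. (p, q) \<in> move_top x r \<longleftrightarrow> ((p, q) \<in> r \<and> p \<noteq> x \<and> q \<noteq> x) \<or> (p = x \<and> q \<noteq> x)"
    unfolding move_top_def by blast
  have ren: "rename_profile (sw u v) (top_profile u R) = top_profile v R"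
    if "map_prod (sw u v) (sw u v) ` move_top u r1 = move_top v r1"
       "map_prod (sw u v) (sw u v) ` move_top u r2 = move_top v r2" for u v
    using that unfolding rename_profile_def top_profile_def R_def by auto
  have key: "map_prod (sw u v) (sw u v) ` move_top u (rk g) = move_top v (rk g)"
    if "\<And>p q. tp u g (sw u v p) < tp u g (sw u v q) \<longleftrightarrow> tp v g p < tp v g q" for u v g
    unfolding mt_rk rk_img[OF sw_inv] by (rule rk_eq) (use that in simp)
  have c4: "\<And>P. \<lbrakk>p = a \<Longrightarrow> P; p = b \<Longrightarrow> P; p = c \<Longrightarrow> P; p \<noteq> a \<Longrightarrow> p \<noteq> b \<Longrightarrow> p \<noteq> c \<Longrightarrow> P\<rbrakk> \<Longrightarrow> P" for p
    by blast
  have eab: "\<delta> (top_profile a R) = \<delta> (top_profile b R)"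
  proof -
    have "rename_profile (sw a b) (top_profile a R) = top_profile b R"
      apply (rule ren; unfold r1_def r2_def; rule key)
      subgoal for p q
        apply (rule c4[of p]; rule c4[of q])
        using abc by (simp_all add: tp_def sw_def h_def)
      subgoal for p q
        apply (rule c4[of p]; rule c4[of q])
        using abc by (simp_all add: tp_def sw_def h_def h2_def)
      done
    then show ?thesis using neu proft sw_bij unfolding neutral_def by metis
  qed
  have ebc: "\<delta> (top_profile b R) = \<delta> (top_profile c R)"
  proof -
    have "rename_profile (sw b c) (top_profile b R) = top_profile c R"
      apply (rule ren; unfold r1_def r2_def; rule key)
      subgoal for p q
        apply (rule c4[of p]; rule c4[of q])
        using abc by (simp_all add: tp_def sw_def h_def)
      subgoal for p q
        apply (rule c4[of p]; rule c4[of q])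
        using abc by (simp_all add: tp_def sw_def h_def h2_def)
      done
    then show ?thesis using neu proft sw_bij unfolding neutral_def by metis
  qed
  define f where "f y = \<delta> (top_profile y R)" for y
  have "Min (range f) \<in> range f" by (rule Min_in) auto
  then obtain m where m: "f m = Min (range f)" by (metis rangeE)
  have mle: "f m \<le> f y" for y unfolding m by (rule Min_le) auto
  have mD: "m \<in> Delta \<delta> R" unfolding Delta_def using mle by (simp add: f_def)
  have "f b = f m"
  proof -
    have "m = a \<or> m = c" using notD mD by blast
    then show ?thesis using eab ebc by (auto simp: f_def)
  qed
  then have "b \<in> Delta \<delta> R" unfolding Delta_def using mle by (simp add: f_def)
  moreover have "b \<notin> Delta \<delta> R" using abc by (intro notD) auto
  ultimately show False by blast
qed

end
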